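(* Let $n\ge 4$, let $s_i=(i,i+1)\in S_n$, and let $\pi:S_n\to\mathrm{O}(V)$ be a real representation. Put $h_\pi=\frac{\chi_\pi(1)-\chi_\pi(s_1s_3)}{2}$. Let $1\le i,k\le n-1$ with $|i-k|>1$, and let $c_i,c_k\in\mathrm{Pin}(V)$ satisfy $\rho(c_i)=\pi(s_i)$, $\rho(c_k)=\pi(s_k)$ and $c_i^2=c_k^2=1$. Then $c_ic_k=c_kc_i$ if and only if $h_\pi$ is a multiple of $4$.
   Context: $V$ is a Euclidean space and $\chi_\pi$ the character of $\pi$. $\mathrm{Pin}(V)$ is the Pin group of $V$ defined inside the Clifford algebra $C(V)$ (tensor algebra modulo the ideal generated by $v\otimes v+|v|^2$), and $\rho:\mathrm{Pin}(V)\to\mathrm{O}(V)$ is the standard double cover with kernel $\{\pm1\}$, sending a unit vector $v$ to the reflection in $v^\perp$. *)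

theory Defs
  imports "HOL-Analysis.Analysis"
begin

text \<open>Euclidean space V = R^'d (standard inner product, orthonormal basis indexed by
the finite linearly ordered type 'd). The Clifford algebra C(V) (tensor algebra modulo
the ideal generated by v*v + |v|^2) is realised concretely on the basis e_A, A a subset
of 'd, with e_i e_i = -1 and e_i e_j = - e_j e_i for i different from j.\<close>

type_synonym 'd cliff = "'d set \<Rightarrow> real"

definition cl_sign :: "'d::{finite,linorder} set \<Rightarrow> 'd set \<Rightarrow> real" where
  "cl_sign A B = (-1) ^ card {(a, b). a \<in> A \<and> b \<in> B \<and> b < a} * (-1) ^ card (A \<inter> B)"

definition cl_mult :: "'d::{finite,linorder} cliff \<Rightarrow> 'd cliff \<Rightarrow> 'd cliff" where
  "cl_mult x y = (\<lambda>C. \<Sum>A\<in>UNIV. \<Sum>B\<in>UNIV.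
      if (A - B) \<union> (B - A) = C then cl_sign A B * x A * y B else 0)"

definition cl_one :: "'d::{finite,linorder} cliff" where
  "cl_one = (\<lambda>A. if A = {} then 1 else 0)"

definition cl_vec :: "real^'d::{finite,linorder} \<Rightarrow> 'd cliff" where
  "cl_vec v = (\<lambda>A. \<Sum>i\<in>UNIV. if A = {i} then v $ i else 0)"

definition cl_alpha :: "'d::{finite,linorder} cliff \<Rightarrow> 'd cliff" where
  "cl_alpha x = (\<lambda>A. (-1) ^ card A * x A)"

definition cl_inv :: "'d::{finite,linorder} cliff \<Rightarrow> 'd cliff" where
  "cl_inv x = (THE y. cl_mult x y = cl_one \<and> cl_mult y x = cl_one)"

inductive pin :: "'d::{finite,linorder} cliff \<Rightarrow> bool" where
  pin_one: "pin cl_one"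
| pin_step: "pin x \<Longrightarrow> norm v = 1 \<Longrightarrow> pin (cl_mult x (cl_vec v))"

text \<open>The double cover rho : Pin(V) \<rightarrow> O(V), rho(x)(w) = alpha(x) w x^{-1}, as a matrix
(column j is the image of the j-th basis vector).\<close>
definition cl_rho :: "('d::{finite,linorder}) cliff \<Rightarrow> real^('d::{finite,linorder})^('d::{finite,linorder})" where
  "cl_rho x = (\<chi> i j. cl_mult (cl_mult (cl_alpha x) (cl_vec (axis j 1))) (cl_inv x) {i})"

definition adj_transp :: "nat \<Rightarrow> nat \<Rightarrow> nat" where
  "adj_transp i = (\<lambda>x. if x = i then i + 1 else if x = i + 1 then i else x)"

definition orth_rep :: "nat \<Rightarrow> ((nat \<Rightarrow> nat) \<Rightarrow> real^('d::finite)^'d) \<Rightarrow> bool" where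
  "orth_rep n \<pi> \<longleftrightarrow>
     (\<forall>p. p permutes {1..n} \<longrightarrow> orthogonal_matrix (\<pi> p)) \<and>
     (\<forall>p q. p permutes {1..n} \<longrightarrow> q permutes {1..n} \<longrightarrow> \<pi> (p \<circ> q) = \<pi> p ** \<pi> q)"

definition character :: "((nat \<Rightarrow> nat) \<Rightarrow> real^('d::finite)^'d) \<Rightarrow> (nat \<Rightarrow> nat) \<Rightarrow> real" where
  "character \<pi> g = trace (\<pi> g)"

end

theory Submission
  imports Defs
begin

definition sd :: "'a set \<Rightarrow> 'a set \<Rightarrow> 'a set" where "sd A B = (A - B) \<union> (B - A)"

lemma sd_eq_iff: "sd A B = C \<longleftrightarrow> B = sd A C"
  unfolding sd_def by blast

lemma sd_sd: "sd A (sd A B) = B" unfolding sd_def by blast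
lemma sd_assoc: "sd (sd A B) C = sd A (sd B C)" unfolding sd_def by blast
lemma sd_comm: "sd A B = sd B A" unfolding sd_def by blast
lemma sd_self: "sd A A = {}" unfolding sd_def by blast
lemma sd_empty: "sd A {} = A" "sd {} A = A" unfolding sd_def by blast+

lemma cl_mult_alt:
  "cl_mult x y C = (\<Sum>A\<in>UNIV. cl_sign A (sd A C) * x A * y (sd A C))"
proof -
  have "cl_mult x y C = (\<Sum>A\<in>UNIV. \<Sum>B\<in>UNIV. if B = sd A C then cl_sign A B * x A * y B else 0)"
    unfolding cl_mult_def sd_def[symmetric] by (simp only: sd_eq_iff)
  also have "\<dots> = (\<Sum>A\<in>UNIV. cl_sign A (sd A C) * x A * y (sd A C))"
    by simp
  finally show ?thesis .
qed

lemma card_sd: "finite P \<Longrightarrow> finite Q \<Longrightarrow> card (sd P Q) + 2 * card (P \<inter> Q) = card P + card Q"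
proof -
  assume f: "finite P" "finite Q"
  have "sd P Q = (P - Q) \<union> (Q - P)" by (simp add: sd_def)
  then have "card (sd P Q) = card (P - Q) + card (Q - P)" using f
    by (simp add: card_Un_disjoint Diff_Int_distrib2 inf_commute) 
  moreover have "card P = card (P - Q) + card (P \<inter> Q)" using f
    by (metis Int_lower1 add.commute card_Diff_subset_Int card_mono diff_add_inverse Diff_Diff_Int card_Diff_subset finite_Int le_add_diff_inverse2)
  moreover have "card Q = card (Q - P) + card (P \<inter> Q)" using f
    by (metis Int_commute Int_lower1 card_Diff_subset_Int card_mono finite_Int Diff_Diff_Int card_Diff_subset le_add_diff_inverse2)
  ultimately show ?thesis by simp
qed

lemma neg1_sd: "finite P \<Longrightarrow> finite Q \<Longrightarrow> (-1::real) ^ card (sd P Q) = (-1) ^ card P * (-1) ^ card Q"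
proof -
  assume f: "finite P" "finite Q"
  have "(-1::real) ^ card (sd P Q) = (-1) ^ (card (sd P Q) + 2 * card (P \<inter> Q))"
    by (simp add: power_add power_mult)
  also have "\<dots> = (-1) ^ card P * (-1) ^ card Q" using card_sd[OF f] by (simp add: power_add)
  finally show ?thesis .
qed

definition pairs :: "'d::linorder set \<Rightarrow> 'd set \<Rightarrow> ('d \<times> 'd) set" where
  "pairs A B = {(a, b). a \<in> A \<and> b \<in> B \<and> b < a}"

lemma cl_sign_pairs: "cl_sign A B = (-1) ^ card (pairs A B) * (-1) ^ card (A \<inter> B)"
  unfolding cl_sign_def pairs_def by simp

lemma pairs_sd1: "pairs (sd X Y) Z = sd (pairs X Z) (pairs Y Z)"
  unfolding pairs_def sd_def by auto
lemma pairs_sd2: "pairs Z (sd X Y) = sd (pairs Z X) (pairs Z Y)"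
  unfolding pairs_def sd_def by auto
lemma int_sd1: "(sd X Y) \<inter> Z = sd (X \<inter> Z) (Y \<inter> Z)" unfolding sd_def by auto
lemma int_sd2: "Z \<inter> (sd X Y) = sd (Z \<inter> X) (Z \<inter> Y)" unfolding sd_def by auto

lemma cl_sign_sd1: "cl_sign (sd X Y) (Z::'d::{finite,linorder} set) = cl_sign X Z * cl_sign Y Z"
  unfolding cl_sign_pairs pairs_sd1 int_sd1
  by (subst neg1_sd, simp, simp)+ (simp add: mult_ac)

lemma cl_sign_sd2: "cl_sign Z (sd X Y) = cl_sign Z X * cl_sign (Z::'d::{finite,linorder} set) Y"
  unfolding cl_sign_pairs pairs_sd2 int_sd2
  by (subst neg1_sd, simp, simp)+ (simp add: mult_ac)

lemma cl_sign_sq: "cl_sign A B * cl_sign A B = 1"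
  unfolding cl_sign_def by (simp add: mult_ac power_mult_distrib[symmetric] flip: power_add)

lemma sum_reindex_sd: "(\<Sum>C\<in>UNIV. f C) = (\<Sum>B\<in>(UNIV::'a::finite set set). f (sd A B))"
  by (rule sum.reindex_bij_witness[where i="sd A" and j="sd A"]) (auto simp: sd_sd)

lemma cl_mult_assoc: "cl_mult (cl_mult x y) z = cl_mult x (cl_mult y (z::'d::{finite,linorder} cliff))"
proof
  fix D
  have "cl_mult (cl_mult x y) z D = (\<Sum>C\<in>UNIV. \<Sum>A\<in>UNIV. cl_sign C (sd C D) * cl_sign A (sd A C) * x A * y (sd A C) * z (sd C D))"
    unfolding cl_mult_alt[of _ _ D] cl_mult_alt[of x y] by (simp add: sum_distrib_left sum_distrib_right mult_ac)
  also have "\<dots> = (\<Sum>A\<in>UNIV. \<Sum>C\<in>UNIV. cl_sign C (sd C D) * cl_sign A (sd A C) * x A * y (sd A C) * z (sd C D))"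
    by (rule sum.swap)
  also have "\<dots> = (\<Sum>A\<in>UNIV. \<Sum>B\<in>UNIV. cl_sign (sd A B) (sd (sd A B) D) * cl_sign A B * x A * y B * z (sd (sd A B) D))"
  proof (rule sum.cong[OF refl])
    fix A
    show "(\<Sum>C\<in>UNIV. cl_sign C (sd C D) * cl_sign A (sd A C) * x A * y (sd A C) * z (sd C D)) =
      (\<Sum>B\<in>UNIV. cl_sign (sd A B) (sd (sd A B) D) * cl_sign A B * x A * y B * z (sd (sd A B) D))"
      by (rule sum_reindex_sd[where A=A, THEN trans]) (simp add: sd_sd)
  qed
  also have "\<dots> = (\<Sum>A\<in>UNIV. \<Sum>B\<in>UNIV. cl_sign A (sd A D) * cl_sign B (sd B (sd A D)) * x A * y B * z (sd B (sd A D)))"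
  proof (rule sum.cong[OF refl], rule sum.cong[OF refl])
    fix A B :: "'d set"
    have e: "sd (sd A B) D = sd B (sd A D)" unfolding sd_def by blast
    have "cl_sign (sd A B) (sd (sd A B) D) * cl_sign A B =
      (cl_sign A A * cl_sign A D * cl_sign B A * cl_sign B B * cl_sign B D) * (cl_sign A B * cl_sign A B)"
      by (simp add: cl_sign_sd1 cl_sign_sd2 sd_assoc mult_ac)
    also have "\<dots> = cl_sign A (sd A D) * cl_sign B (sd B (sd A D))"
      by (simp add: cl_sign_sq cl_sign_sd1 cl_sign_sd2 mult_ac)
    finally show "cl_sign (sd A B) (sd (sd A B) D) * cl_sign A B * x A * y B * z (sd (sd A B) D) =
      cl_sign A (sd A D) * cl_sign B (sd B (sd A D)) * x A * y B * z (sd B (sd A D))"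
      unfolding e by (simp add: mult_ac)
  qed
  also have "\<dots> = cl_mult x (cl_mult y z) D"
    unfolding cl_mult_alt[of _ _ D] cl_mult_alt[of y z] by (simp add: sum_distrib_left sum_distrib_right mult_ac)
  finally show "cl_mult (cl_mult x y) z D = cl_mult x (cl_mult y z) D" .
qed



definition bl :: "'d set \<Rightarrow> 'd set \<Rightarrow> real" where "bl S = (\<lambda>A. if A = S then 1 else 0)"

lemma cl_sign_empty: "cl_sign {} A = 1" "cl_sign A {} = 1"
  unfolding cl_sign_def by simp_all

lemma cl_mult_one_left: "cl_mult cl_one x = (x::'d::{finite,linorder} cliff)"
proof
  fix C
  have "cl_mult cl_one x C = (\<Sum>A\<in>UNIV. if A = {} then cl_sign A (sd A C) * x (sd A C) else 0)"
    unfolding cl_mult_alt cl_one_def by (rule sum.cong) auto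
  also have "\<dots> = x C" by (simp add: cl_sign_empty sd_empty)
  finally show "cl_mult cl_one x C = x C" .
qed

lemma cl_mult_one_right: "cl_mult x cl_one = (x::'d::{finite,linorder} cliff)"
proof
  fix C
  have "cl_mult x cl_one C = (\<Sum>A\<in>UNIV. if A = C then cl_sign A (sd A C) * x A else 0)"
    unfolding cl_mult_alt cl_one_def by (rule sum.cong) (auto simp: sd_def)
  also have "\<dots> = x C" by (simp add: cl_sign_empty sd_self)
  finally show "cl_mult x cl_one C = x C" .
qed

lemma cl_mult_add_left: "cl_mult (\<lambda>A. x A + y A) z C = cl_mult x z C + cl_mult y z C"
  unfolding cl_mult_alt by (simp add: algebra_simps sum.distrib)
lemma cl_mult_add_right: "cl_mult z (\<lambda>A. x A + y A) C = cl_mult z x C + cl_mult z y C"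
  unfolding cl_mult_alt by (simp add: algebra_simps sum.distrib)
lemma cl_mult_smul_left: "cl_mult (\<lambda>A. c * x A) z C = c * cl_mult x z C"
  unfolding cl_mult_alt by (simp add: algebra_simps sum_distrib_left)
lemma cl_mult_smul_right: "cl_mult z (\<lambda>A. c * x A) C = c * cl_mult z x C"
  unfolding cl_mult_alt by (simp add: algebra_simps sum_distrib_left)
lemma cl_mult_neg_left: "cl_mult (\<lambda>A. - x A) z C = - cl_mult x z C"
  unfolding cl_mult_alt by (simp add: algebra_simps sum_negf)
lemma cl_mult_neg_right: "cl_mult z (\<lambda>A. - x A) C = - cl_mult z x C"
  unfolding cl_mult_alt by (simp add: algebra_simps sum_negf)
lemma cl_mult_sum_left: "cl_mult (\<lambda>A. \<Sum>j\<in>J. f j A) z C = (\<Sum>j\<in>J. cl_mult (f j) z C)"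
  unfolding cl_mult_alt by (simp add: sum_distrib_left sum_distrib_right mult_ac sum.swap[of _ J])
lemma cl_mult_sum_right: "cl_mult z (\<lambda>A. \<Sum>j\<in>J. f j A) C = (\<Sum>j\<in>J. cl_mult z (f j) C)"
  unfolding cl_mult_alt by (simp add: sum_distrib_left sum_distrib_right mult_ac sum.swap[of _ J])

lemma cl_mult_bl: "cl_mult (bl S) (bl T) C = cl_sign S T * bl (sd S T) C"
proof -
  have "cl_mult (bl S) (bl T) C = (\<Sum>A\<in>UNIV. if A = S then (if sd A C = T then cl_sign A (sd A C) else 0) else 0)"
    unfolding cl_mult_alt bl_def by (rule sum.cong) auto
  also have "\<dots> = cl_sign S T * bl (sd S T) C"
    by (auto simp: bl_def sd_eq_iff sd_sd)
  finally show ?thesis .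
qed

lemma cl_vec_bl: "cl_vec v = (\<lambda>A. \<Sum>i\<in>UNIV. v $ i * bl {i} A)"
  unfolding cl_vec_def bl_def by (intro ext sum.cong) auto

lemma cl_sign_single: "cl_sign {i} {j} = (if i = j then -1 else if j < i then -1 else (1::real))"
proof -
  have "{(a, b). a \<in> {i} \<and> b \<in> {j} \<and> b < a} = (if j < i then {(i,j)} else {})" by auto
  then show ?thesis unfolding cl_sign_def by auto
qed

lemma cl_vec_anticomm:
  "cl_mult (cl_vec v) (cl_vec w) C + cl_mult (cl_vec w) (cl_vec v) C = -2 * (v \<bullet> w) * cl_one C"
proof -
  have 1: "cl_mult (cl_vec v) (cl_vec w) C = (\<Sum>i\<in>UNIV. \<Sum>j\<in>UNIV. v$i * w$j * (cl_sign {i} {j} * bl (sd {i} {j}) C))"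
    unfolding cl_vec_bl cl_mult_sum_left cl_mult_sum_right cl_mult_smul_left cl_mult_smul_right cl_mult_bl
    by (simp add: mult_ac)
  have 2: "cl_mult (cl_vec w) (cl_vec v) C = (\<Sum>i\<in>UNIV. \<Sum>j\<in>UNIV. v$i * w$j * (cl_sign {j} {i} * bl (sd {i} {j}) C))"
    unfolding cl_vec_bl cl_mult_sum_left cl_mult_sum_right cl_mult_smul_left cl_mult_smul_right cl_mult_bl
    by (subst sum.swap) (simp add: mult_ac sd_comm)
  have "cl_mult (cl_vec v) (cl_vec w) C + cl_mult (cl_vec w) (cl_vec v) C =
     (\<Sum>i\<in>UNIV. \<Sum>j\<in>UNIV. if j = i then -2 * v$i * w$i * cl_one C else 0)"
    unfolding 1 2 sum.distrib[symmetric]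
    by (intro sum.cong refl) (auto simp: cl_sign_single algebra_simps sd_self bl_def cl_one_def)
  also have "\<dots> = -2 * (v \<bullet> w) * cl_one C"
    by (simp add: inner_vec_def sum_distrib_left sum_distrib_right mult_ac)
  finally show ?thesis .
qed

lemma cl_vec_sq: "cl_mult (cl_vec v) (cl_vec v) C = - ((v \<bullet> v) * cl_one C)"
  using cl_vec_anticomm[of v v C] by simp

lemma cl_vec_orth: "v \<bullet> w = 0 \<Longrightarrow> cl_mult (cl_vec v) (cl_vec w) = (\<lambda>C. - cl_mult (cl_vec w) (cl_vec v) C)"
  using cl_vec_anticomm[of v w] by (auto simp: fun_eq_iff add_eq_0_iff)

lemma cl_alpha_mult: "cl_alpha (cl_mult x y) = cl_mult (cl_alpha x) (cl_alpha (y::'d::{finite,linorder} cliff))"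
proof
  fix C
  show "cl_alpha (cl_mult x y) C = cl_mult (cl_alpha x) (cl_alpha y) C"
    unfolding cl_alpha_def cl_mult_alt sum_distrib_left
  proof (rule sum.cong[OF refl])
    fix A :: "'d set"
    have "(-1::real) ^ card (sd A C) = (-1) ^ card A * (-1) ^ card C" by (rule neg1_sd) auto
    moreover have "(-1::real) ^ card A * (-1) ^ card A = 1" by (simp flip: power_add add: mult_2[symmetric] power_mult)
    ultimately show "(-1) ^ card C * (cl_sign A (sd A C) * x A * y (sd A C)) =
      cl_sign A (sd A C) * ((-1) ^ card A * x A) * ((-1) ^ card (sd A C) * y (sd A C))"
      by (metis (no_types, lifting) mult.assoc mult.commute mult.left_commute mult_1)
  qed
qed

lemma cl_alpha_vec: "cl_alpha (cl_vec v) = (\<lambda>A. - cl_vec v A)"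
  unfolding cl_alpha_def cl_vec_def fun_eq_iff sum_distrib_left sum_negf[symmetric]
  by (intro allI sum.cong) auto

lemma cl_alpha_one: "cl_alpha cl_one = cl_one"
  unfolding cl_alpha_def cl_one_def by auto

lemma cl_alpha_smul: "cl_alpha (\<lambda>A. c * x A) = (\<lambda>A. c * cl_alpha x A)"
  unfolding cl_alpha_def by auto
lemma cl_alpha_neg: "cl_alpha (\<lambda>A. - x A) = (\<lambda>A. - cl_alpha x A)"
  unfolding cl_alpha_def by auto



lemma cl_mult_neg_left': "cl_mult (\<lambda>A. - x A) z = (\<lambda>C. - cl_mult x z C)"
  by (rule ext, rule cl_mult_neg_left)
lemma cl_mult_neg_right': "cl_mult z (\<lambda>A. - x A) = (\<lambda>C. - cl_mult z x C)"
  by (rule ext, rule cl_mult_neg_right)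
lemma cl_mult_smul_left': "cl_mult (\<lambda>A. c * x A) z = (\<lambda>C. c * cl_mult x z C)"
  by (rule ext, rule cl_mult_smul_left)
lemma cl_mult_smul_right': "cl_mult z (\<lambda>A. c * x A) = (\<lambda>C. c * cl_mult z x C)"
  by (rule ext, rule cl_mult_smul_right)

lemma cl_mult_diff_left: "cl_mult (\<lambda>A. x A - y A) z C = cl_mult x z C - cl_mult y z C"
  unfolding cl_mult_alt by (simp add: algebra_simps sum_subtractf)
lemma cl_mult_diff_right: "cl_mult z (\<lambda>A. x A - y A) C = cl_mult z x C - cl_mult z y C"
  unfolding cl_mult_alt by (simp add: algebra_simps sum_subtractf)

lemma cl_inv_unique:
  assumes "cl_mult x y = cl_one" "cl_mult y x = (cl_one::'d::{finite,linorder} cliff)"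
  shows "cl_inv x = y"
  unfolding cl_inv_def
proof (rule the_equality)
  show "cl_mult x y = cl_one \<and> cl_mult y x = cl_one" using assms by simp
  fix z assume "cl_mult x z = cl_one \<and> cl_mult z x = cl_one"
  then have "z = cl_mult (cl_mult y x) z" by (simp add: assms cl_mult_one_left)
  also have "\<dots> = y" by (simp add: cl_mult_assoc \<open>cl_mult x z = cl_one \<and> cl_mult z x = cl_one\<close> cl_mult_one_right)
  finally show "z = y" .
qed

lemma cl_vec_neg: "cl_vec (- v) = (\<lambda>A. - cl_vec v A)"
  unfolding cl_vec_def by (auto simp: fun_eq_iff sum_negf[symmetric] intro!: sum.cong)
lemma cl_vec_add: "cl_vec (v + w) = (\<lambda>A. cl_vec v A + cl_vec w A)"
  unfolding cl_vec_def by (auto simp: fun_eq_iff sum.distrib[symmetric] intro!: sum.cong)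
lemma cl_vec_diff: "cl_vec (v - w) = (\<lambda>A. cl_vec v A - cl_vec w A)"
  unfolding cl_vec_def by (auto simp: fun_eq_iff sum_subtractf[symmetric] intro!: sum.cong)
lemma cl_vec_scale: "cl_vec (c *\<^sub>R v) = (\<lambda>A. c * cl_vec v A)"
  unfolding cl_vec_def by (auto simp: fun_eq_iff sum_distrib_left intro!: sum.cong)
lemma cl_vec_zero: "cl_vec 0 = (\<lambda>A. 0)"
  unfolding cl_vec_def by (rule ext) (simp cong: if_cong)

lemma cl_vec_unit_sq: "norm v = 1 \<Longrightarrow> cl_mult (cl_vec v) (cl_vec v) = (\<lambda>C. - cl_one C)"
  by (rule ext) (simp add: cl_vec_sq power2_norm_eq_inner[symmetric])

lemma cl_vec_unit_sq': "norm v = 1 \<Longrightarrow> cl_mult (cl_vec v) (cl_vec (-v)) = cl_one"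
  "norm v = 1 \<Longrightarrow> cl_mult (cl_vec (-v)) (cl_vec v) = cl_one"
  by (simp_all add: cl_vec_neg cl_mult_neg_left' cl_mult_neg_right' cl_vec_unit_sq)

lemma cl_vwv:
  assumes "norm v = 1"
  shows "cl_mult (cl_mult (cl_vec v) (cl_vec w)) (cl_vec v) = cl_vec (w - (2 * (v \<bullet> w)) *\<^sub>R v)"
proof -
  have vw: "cl_mult (cl_vec v) (cl_vec w) = (\<lambda>C. - cl_mult (cl_vec w) (cl_vec v) C + (-2 * (v \<bullet> w)) * cl_one C)"
  proof (rule ext)
    fix C show "cl_mult (cl_vec v) (cl_vec w) C = - cl_mult (cl_vec w) (cl_vec v) C + (-2 * (v \<bullet> w)) * cl_one C"
      using cl_vec_anticomm[of v w C] by linarith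
  qed
  show ?thesis
    unfolding vw
    by (rule ext) (simp add: cl_mult_add_left cl_mult_diff_left cl_mult_neg_left cl_mult_smul_left cl_mult_assoc
      cl_vec_unit_sq[OF assms] cl_mult_neg_right cl_mult_one_right cl_mult_one_left cl_vec_diff cl_vec_scale)
qed

lemma pin_inv:
  assumes "pin (x::'d::{finite,linorder} cliff)"
  shows "\<exists>x'. cl_mult x x' = cl_one \<and> cl_mult x' x = cl_one \<and>
    (\<forall>w. \<exists>u. cl_mult (cl_mult (cl_alpha x) (cl_vec w)) x' = cl_vec u)"
  using assms
proof induction
  case pin_one
  show ?case
    by (rule exI[of _ cl_one]) (auto simp: cl_mult_one_left cl_mult_one_right cl_alpha_one)
next
  case (pin_step x v)
  then obtain x' where x1: "cl_mult x x' = cl_one" and x2: "cl_mult x' x = cl_one"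
    and x3: "\<forall>w. \<exists>u. cl_mult (cl_mult (cl_alpha x) (cl_vec w)) x' = cl_vec u" by blast
  define x'' where "x'' = cl_mult (cl_vec (-v)) x'"
  have "cl_mult (cl_mult x (cl_vec v)) x'' = cl_mult x (cl_mult (cl_mult (cl_vec v) (cl_vec (-v))) x')"
    unfolding x''_def by (simp add: cl_mult_assoc)
  also have "\<dots> = cl_one" using pin_step(2) by (simp add: cl_vec_unit_sq' cl_mult_one_left x1)
  finally have y1: "cl_mult (cl_mult x (cl_vec v)) x'' = cl_one" .
  have "cl_mult x'' (cl_mult x (cl_vec v)) = cl_mult (cl_vec (-v)) (cl_mult (cl_mult x' x) (cl_vec v))"
    unfolding x''_def by (simp add: cl_mult_assoc)
  also have "\<dots> = cl_one" using pin_step(2) by (simp add: cl_vec_unit_sq' cl_mult_one_left x2)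
  finally have y2: "cl_mult x'' (cl_mult x (cl_vec v)) = cl_one" .
  have y3: "\<exists>u. cl_mult (cl_mult (cl_alpha (cl_mult x (cl_vec v))) (cl_vec w)) x'' = cl_vec u" for w
  proof -
    obtain u where u: "cl_mult (cl_mult (cl_alpha x) (cl_vec (w - (2 * (v \<bullet> w)) *\<^sub>R v))) x' = cl_vec u"
      using x3 by blast
    have "cl_mult (cl_mult (cl_alpha (cl_mult x (cl_vec v))) (cl_vec w)) x'' =
      cl_mult (cl_mult (cl_alpha x) (cl_mult (cl_mult (cl_vec v) (cl_vec w)) (cl_vec v))) x'"
      unfolding x''_def cl_alpha_mult cl_alpha_vec cl_vec_neg
      by (simp add: cl_mult_assoc cl_mult_neg_left' cl_mult_neg_right')
    also have "\<dots> = cl_vec u" unfolding cl_vwv[OF pin_step(2)] u ..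
    finally show ?thesis by blast
  qed
  show ?case using y1 y2 y3 by blast
qed

lemma cl_vec_single: "cl_vec u {l} = u $ l"
  unfolding cl_vec_def by simp

lemma cl_vec_matrix: "(\<lambda>A. \<Sum>j\<in>UNIV. w$j * cl_vec (M *v axis j 1) A) = cl_vec (M *v w)"
proof
  fix A
  have col: "(M *v axis j 1) $ i = M $ i $ j" for i j
    by (simp add: matrix_vector_mult_basis column_def)
  have "(\<Sum>j\<in>UNIV. w$j * cl_vec (M *v axis j 1) A) = (\<Sum>j\<in>UNIV. \<Sum>i\<in>UNIV. if A = {i} then M$i$j * w$j else 0)"
    unfolding cl_vec_def col sum_distrib_left by (intro sum.cong refl) (simp add: mult_ac)
  also have "\<dots> = (\<Sum>i\<in>UNIV. \<Sum>j\<in>UNIV. if A = {i} then M$i$j * w$j else 0)"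
    by (rule sum.swap)
  also have "\<dots> = (\<Sum>i\<in>UNIV. if A = {i} then (M *v w) $ i else 0)"
    by (intro sum.cong refl) (simp add: matrix_vector_mult_def)
  also have "\<dots> = cl_vec (M *v w) A" unfolding cl_vec_def ..
  finally show "(\<Sum>j\<in>UNIV. w$j * cl_vec (M *v axis j 1) A) = cl_vec (M *v w) A" .
qed

lemma cl_vec_expand: "cl_vec w = (\<lambda>A. \<Sum>j\<in>UNIV. w$j * cl_vec (axis j 1) A)"
  using cl_vec_matrix[of w "mat 1", symmetric] unfolding matrix_vector_mul_lid .

lemma rho_relation:
  assumes "pin (c::'d::{finite,linorder} cliff)" "cl_mult c c = cl_one" "cl_rho c = M"
  shows "cl_mult (cl_alpha c) (cl_vec w) = cl_mult (cl_vec (M *v w)) c"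
proof -
  obtain x' where x1: "cl_mult c x' = cl_one" and x2: "cl_mult x' c = cl_one"
    and x3: "\<forall>w. \<exists>u. cl_mult (cl_mult (cl_alpha c) (cl_vec w)) x' = cl_vec u"
    using pin_inv[OF assms(1)] by blast
  have "cl_inv c = x'" by (rule cl_inv_unique[OF x1 x2])
  moreover have "cl_inv c = c" by (rule cl_inv_unique[OF assms(2) assms(2)])
  ultimately have xc: "x' = c" by simp
  have ej: "cl_mult (cl_alpha c) (cl_vec (axis j 1)) = cl_mult (cl_vec (M *v axis j 1)) c" for j
  proof -
    obtain u where u: "cl_mult (cl_mult (cl_alpha c) (cl_vec (axis j 1))) c = cl_vec u"
      using x3 xc by blast
    have "u = M *v axis j 1"
    proof -
      have "u $ l = (M *v axis j 1) $ l" for l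
      proof -
      have "M $ l $ j = cl_rho c $ l $ j" using assms(3) by simp
      also have "\<dots> = cl_mult (cl_mult (cl_alpha c) (cl_vec (axis j 1))) (cl_inv c) {l}"
        unfolding cl_rho_def by simp
      also have "\<dots> = u $ l" using u \<open>cl_inv c = c\<close> by (simp add: cl_vec_single)
      finally have "M $ l $ j = u $ l" .
      then show "u $ l = (M *v axis j 1) $ l"
        by (simp add: matrix_vector_mult_basis column_def)
      qed
      then show ?thesis by (simp add: vec_eq_iff)
    qed
    have "cl_mult (cl_alpha c) (cl_vec (axis j 1)) = cl_mult (cl_mult (cl_mult (cl_alpha c) (cl_vec (axis j 1))) c) c"
      by (simp add: cl_mult_assoc assms(2) cl_mult_one_right)
    then show ?thesis by (simp only: u \<open>u = M *v axis j 1\<close>)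
  qed
  show ?thesis
  proof (rule ext)
    fix C
    have "cl_mult (cl_alpha c) (cl_vec w) C = (\<Sum>j\<in>UNIV. w$j * cl_mult (cl_alpha c) (cl_vec (axis j 1)) C)"
      by (subst cl_vec_expand) (simp add: cl_mult_sum_right cl_mult_smul_right)
    also have "\<dots> = (\<Sum>j\<in>UNIV. w$j * cl_mult (cl_vec (M *v axis j 1)) c C)"
      using ej by simp
    also have "\<dots> = cl_mult (\<lambda>A. \<Sum>j\<in>UNIV. w$j * cl_vec (M *v axis j 1) A) c C"
      by (simp add: cl_mult_sum_left cl_mult_smul_left)
    also have "\<dots> = cl_mult (cl_vec (M *v w)) c C" unfolding cl_vec_matrix ..
    finally show "cl_mult (cl_alpha c) (cl_vec w) C = cl_mult (cl_vec (M *v w)) c C" .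
  qed
qed



lemma cl_vec_axis: "cl_vec (axis j 1) = bl {j}"
proof
  fix A
  have "\<And>i. (if A = {i} then axis j 1 $ i else 0) = (if i = j then (if A = {j} then 1 else 0) else (0::real))"
    by (auto simp: axis_def)
  then show "cl_vec (axis j 1) A = bl {j} A" unfolding cl_vec_def bl_def by simp
qed

lemma cl_mult_bl_right: "cl_mult x (bl {j}) C = cl_sign (sd {j} C) {j} * x (sd {j} C)"
proof -
  have "cl_mult x (bl {j}) C = (\<Sum>A\<in>UNIV. if A = sd {j} C then cl_sign A {j} * x A else 0)"
    unfolding cl_mult_alt bl_def by (intro sum.cong refl) (auto simp: sd_def)
  then show ?thesis by simp
qed

lemma cl_mult_bl_left: "cl_mult (bl {j}) x C = cl_sign {j} (sd {j} C) * x (sd {j} C)"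
proof -
  have "cl_mult (bl {j}) x C = (\<Sum>A\<in>UNIV. if A = {j} then cl_sign {j} (sd {j} C) * x (sd {j} C) else 0)"
    unfolding cl_mult_alt bl_def by (intro sum.cong refl) auto
  then show ?thesis by simp
qed

lemma card_pairs_r: "card (pairs A {j}) = card {a\<in>A. j < a}"
proof -
  have "pairs A {j} = (\<lambda>a. (a, j)) ` {a\<in>A. j < a}" unfolding pairs_def by auto
  then show ?thesis by (simp add: card_image inj_on_def)
qed

lemma card_pairs_l: "card (pairs {j} A) = card {b\<in>A. b < j}"
proof -
  have "pairs {j} A = (\<lambda>b. (j, b)) ` {b\<in>A. b < j}" unfolding pairs_def by auto
  then show ?thesis by (simp add: card_image inj_on_def)
qed

lemma sign_flip:
  assumes "j \<in> (A::'d::{finite,linorder} set)"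
  shows "(-1) ^ card A * cl_sign A {j} = - cl_sign {j} A"
proof -
  have AI: "A \<inter> {j} = {j}" "{j} \<inter> A = {j}" using assms by auto
  define a where "a = card {x\<in>A. j < x}"
  define b where "b = card {x\<in>A. x < j}"
  have eq: "A = insert j ({x\<in>A. j < x} \<union> {x\<in>A. x < j})" using assms by auto
  have "card A = card (insert j ({x\<in>A. j < x} \<union> {x\<in>A. x < j}))" using eq by (rule arg_cong)
  also have "\<dots> = Suc (card ({x\<in>A. j < x} \<union> {x\<in>A. x < j}))"
    by (rule card_insert_disjoint) auto
  also have "card ({x\<in>A. j < x} \<union> {x\<in>A. x < j}) = a + b"
    unfolding a_def b_def by (rule card_Un_disjoint) auto
  finally have cA: "card A = Suc (a + b)" .
  have "(-1::real) ^ card A * cl_sign A {j} = (-1) ^ Suc (a + b) * ((-1) ^ a * (-1))"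
    unfolding cA cl_sign_pairs card_pairs_r AI a_def by simp
  also have "\<dots> = (-1) ^ b * ((-1) ^ a * (-1) ^ a)"
    by (simp add: power_add mult_ac)
  also have "\<dots> = (-1) ^ b"
    by (simp flip: power_add add: mult_2[symmetric] power_mult)
  also have "\<dots> = - cl_sign {j} A"
    unfolding cl_sign_pairs card_pairs_l AI b_def by simp
  finally show ?thesis .
qed

lemma kernel_scalar:
  assumes "\<And>j. cl_mult (cl_alpha z) (cl_vec (axis j 1)) = cl_mult (cl_vec (axis j 1)) (z::'d::{finite,linorder} cliff)"
  shows "z = (\<lambda>A. z {} * cl_one A)"
proof
  fix A
  show "z A = z {} * cl_one A"
  proof (cases "A = {}")
    case True then show ?thesis by (simp add: cl_one_def)
  next
    case False
    then obtain j where j: "j \<in> A" by blast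
    have "cl_mult (cl_alpha z) (bl {j}) (sd {j} A) = cl_mult (bl {j}) z (sd {j} A)"
      using assms[of j] unfolding cl_vec_axis by simp
    then have "cl_sign A {j} * ((-1) ^ card A * z A) = cl_sign {j} A * z A"
      unfolding cl_mult_bl_right cl_mult_bl_left sd_sd cl_alpha_def .
    then have "- cl_sign {j} A * z A = cl_sign {j} A * z A"
      using sign_flip[OF j] by (simp add: mult_ac)
    moreover have "cl_sign {j} A \<noteq> 0" unfolding cl_sign_def by simp
    ultimately have "z A = 0" by simp
    then show ?thesis using False by (simp add: cl_one_def)
  qed
qed

lemma cl_mult_zero_left: "cl_mult (\<lambda>A. 0) x C = 0"
  unfolding cl_mult_alt by simp
lemma cl_mult_zero_right: "cl_mult x (\<lambda>A. 0) C = 0"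
  unfolding cl_mult_alt by simp

fun prodL :: "(real^'d::{finite,linorder}) list \<Rightarrow> 'd cliff" where
  "prodL [] = cl_one"
| "prodL (v # L) = cl_mult (cl_vec v) (prodL L)"

definition orthl :: "(real^'d::{finite,linorder}) list \<Rightarrow> bool" where
  "orthl L \<longleftrightarrow> distinct L \<and> (\<forall>v\<in>set L. norm v = 1) \<and> (\<forall>v\<in>set L. \<forall>w\<in>set L. v \<noteq> w \<longrightarrow> v \<bullet> w = 0)"

lemma prodL_append: "prodL (L1 @ L2) = cl_mult (prodL L1) (prodL L2)"
  by (induction L1) (simp_all add: cl_mult_one_left cl_mult_assoc)

lemma prodL_vec_orth:
  "(\<forall>f\<in>set L. f \<bullet> w = 0) \<Longrightarrow>
   cl_mult (prodL L) (cl_vec w) = (\<lambda>C. (-1) ^ length L * cl_mult (cl_vec w) (prodL L) C)"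
proof (induction L)
  case Nil
  then show ?case by (simp add: cl_mult_one_left cl_mult_one_right)
next
  case (Cons v L)
  then have IH: "cl_mult (prodL L) (cl_vec w) = (\<lambda>C. (-1) ^ length L * cl_mult (cl_vec w) (prodL L) C)"
    and vw: "v \<bullet> w = 0" by auto
  have "cl_mult (prodL (v # L)) (cl_vec w) = cl_mult (cl_vec v) (cl_mult (prodL L) (cl_vec w))"
    by (simp add: cl_mult_assoc)
  also have "\<dots> = (\<lambda>C. (-1) ^ length L * cl_mult (cl_mult (cl_vec v) (cl_vec w)) (prodL L) C)"
    unfolding IH by (simp add: cl_mult_smul_right' cl_mult_assoc)
  also have "\<dots> = (\<lambda>C. (-1) ^ length (v # L) * cl_mult (cl_vec w) (prodL (v # L)) C)"
    unfolding cl_vec_orth[OF vw] by (simp add: cl_mult_neg_left' cl_mult_assoc)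
  finally show ?case .
qed

lemma prodL_vec_orth':
  "(\<forall>f\<in>set L. f \<bullet> w = 0) \<Longrightarrow>
   cl_mult (cl_vec w) (prodL L) = (\<lambda>C. (-1) ^ length L * cl_mult (prodL L) (cl_vec w) C)"
  by (simp add: prodL_vec_orth)

lemma prodL_vec_in:
  "orthl L \<Longrightarrow> f \<in> set L \<Longrightarrow>
   cl_mult (prodL L) (cl_vec f) = (\<lambda>C. (-1) ^ (length L - 1) * cl_mult (cl_vec f) (prodL L) C)"
proof (induction L)
  case Nil
  then show ?case by simp
next
  case (Cons v L)
  have oL: "orthl L" using Cons.prems unfolding orthl_def by auto
  show ?case
  proof (cases "f = v")
    case True
    have "\<forall>g\<in>set L. g \<bullet> f = 0" using Cons.prems True unfolding orthl_def
      by (metis distinct.simps(2) list.set_intros(1,2))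
    then have "cl_mult (prodL (v # L)) (cl_vec f) = (\<lambda>C. (-1) ^ length L * cl_mult (cl_vec v) (cl_mult (cl_vec f) (prodL L)) C)"
      by (simp add: cl_mult_assoc prodL_vec_orth cl_mult_smul_right')
    then show ?thesis using True by (simp add: cl_mult_assoc)
  next
    case False
    then have fL: "f \<in> set L" using Cons.prems by auto
    have vf: "v \<bullet> f = 0" using Cons.prems False unfolding orthl_def by auto
    have Lpos: "length L \<ge> 1" using fL by (cases L) auto
    have "cl_mult (prodL (v # L)) (cl_vec f) = (\<lambda>C. (-1) ^ (length L - 1) * cl_mult (cl_mult (cl_vec v) (cl_vec f)) (prodL L) C)"
      using Cons.IH[OF oL fL] by (simp add: cl_mult_assoc cl_mult_smul_right')
    also have "\<dots> = (\<lambda>C. (-1) ^ (length (v # L) - 1) * cl_mult (cl_vec f) (prodL (v # L)) C)"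
      unfolding cl_vec_orth[OF vf] using Lpos
      by (auto simp: cl_mult_neg_left' cl_mult_assoc fun_eq_iff power_eq_if)
    finally show ?thesis .
  qed
qed

lemma prodL_vec_span:
  assumes "orthl L" "w \<in> span (set L)"
  shows "cl_mult (prodL L) (cl_vec w) = (\<lambda>C. (-1) ^ (length L - 1) * cl_mult (cl_vec w) (prodL L) C)"
  using assms(2)
proof (induction rule: span_induct)
  case (step x)
  then show ?case using prodL_vec_in[OF assms(1)] by simp
next
  case base
  show ?case unfolding subspace_def
    by (auto simp: cl_vec_zero cl_vec_add cl_vec_scale cl_mult_add_left cl_mult_add_right
      cl_mult_smul_left cl_mult_smul_right algebra_simps cl_mult_zero_left cl_mult_zero_right)
qed

lemma prodL_rev:
  "\<forall>v\<in>set L. norm v = 1 \<Longrightarrow> cl_mult (prodL L) (prodL (rev L)) = (\<lambda>C. (-1) ^ length L * cl_one C)"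
proof (induction L)
  case Nil
  then show ?case by (simp add: cl_mult_one_left)
next
  case (Cons v L)
  then have IH: "cl_mult (prodL L) (prodL (rev L)) = (\<lambda>C. (-1) ^ length L * cl_one C)" and nv: "norm v = 1" by auto
  have "cl_mult (prodL (v # L)) (prodL (rev (v # L))) =
     cl_mult (cl_vec v) (cl_mult (cl_mult (prodL L) (prodL (rev L))) (cl_vec v))"
    by (simp add: prodL_append cl_mult_assoc cl_mult_one_right)
  also have "\<dots> = (\<lambda>C. (-1) ^ length (v # L) * cl_one C)"
    unfolding IH by (simp add: cl_mult_smul_left' cl_mult_smul_right' cl_mult_one_left cl_vec_unit_sq[OF nv])
  finally show ?case .
qed

lemma prodL_comm:
  "(\<forall>v\<in>set P. \<forall>w\<in>set Q. v \<bullet> w = 0) \<Longrightarrow>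
   cl_mult (prodL P) (prodL Q) = (\<lambda>C. (-1) ^ (length P * length Q) * cl_mult (prodL Q) (prodL P) C)"
proof (induction P)
  case Nil
  then show ?case by (simp add: cl_mult_one_left cl_mult_one_right)
next
  case (Cons v P)
  then have IH: "cl_mult (prodL P) (prodL Q) = (\<lambda>C. (-1) ^ (length P * length Q) * cl_mult (prodL Q) (prodL P) C)"
    and vQ: "\<forall>w\<in>set Q. w \<bullet> v = 0" by (auto simp: inner_commute)
  have "cl_mult (prodL (v # P)) (prodL Q) = (\<lambda>C. (-1) ^ (length P * length Q) * cl_mult (cl_mult (cl_vec v) (prodL Q)) (prodL P) C)"
    by (simp add: cl_mult_assoc IH cl_mult_smul_right')
  also have "\<dots> = (\<lambda>C. (-1) ^ (length (v # P) * length Q) * cl_mult (prodL Q) (prodL (v # P)) C)"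
    unfolding prodL_vec_orth'[OF vQ] by (simp add: cl_mult_smul_left' cl_mult_assoc power_add mult_ac)
  finally show ?case .
qed



lemma cl_alpha_prodL: "cl_alpha (prodL L) = (\<lambda>A. (-1) ^ length L * prodL L A)"
  by (induction L) (simp_all add: cl_alpha_one cl_alpha_mult cl_alpha_vec cl_mult_neg_left' cl_mult_smul_right')

lemma symm_inner: "transpose M = M \<Longrightarrow> (M *v x) \<bullet> y = x \<bullet> (M *v (y::real^'n))"
  by (metis dot_lmul_matrix vector_transpose_matrix)

lemma span_eig:
  assumes "\<forall>f\<in>S. M *v f = - f" "p \<in> span S" shows "M *v p = - (p::real^'n)"
  using assms(2)
proof (induction rule: span_induct)
  case base
  then show ?case unfolding subspace_def
    by (auto simp: matrix_vector_right_distrib matrix_vector_mult_scaleR)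
qed (use assms(1) in auto)

lemma orthl_rev: "orthl L \<Longrightarrow> orthl (rev L)"
  unfolding orthl_def by auto

lemma y_relation:
  assumes oL: "orthl L" and eig: "\<forall>f\<in>set L. M *v f = - f"
    and dec: "\<And>w. \<exists>p q. w = p + q \<and> p \<in> span (set L) \<and> M *v q = q \<and> (\<forall>f\<in>set L. f \<bullet> q = 0)"
  shows "cl_mult (cl_alpha (prodL L)) (cl_vec w) = cl_mult (cl_vec (M *v w)) (prodL L)"
proof -
  obtain p q where w: "w = p + q" and p: "p \<in> span (set L)" and q: "M *v q = q" and qo: "\<forall>f\<in>set L. f \<bullet> q = 0"
    using dec by blast
  have Mp: "M *v p = - p" using span_eig[OF eig p] .
  have Pq: "cl_mult (prodL L) (cl_vec q) = (\<lambda>C. (-1) ^ length L * cl_mult (cl_vec q) (prodL L) C)"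
    using prodL_vec_orth[OF qo] .
  show ?thesis
  proof (cases "L = []")
    case True
    then have "p = 0" using p by simp
    then show ?thesis using True w q by (simp add: cl_alpha_one cl_mult_one_left cl_mult_one_right)
  next
    case False
    then have n: "length L \<ge> 1" by (cases L) auto
    have Pp: "cl_mult (prodL L) (cl_vec p) = (\<lambda>C. (-1) ^ (length L - 1) * cl_mult (cl_vec p) (prodL L) C)"
      using prodL_vec_span[OF oL p] .
    have s: "(-1::real) ^ length L * (-1) ^ (length L - 1) = -1"
      using n by (metis (no_types, lifting) add_diff_inverse_nat mult.commute mult_minus1_right not_less
        power_Suc power_add Suc_eq_plus1 less_one mult_1 power_one_right neg_one_even_power neg_one_odd_power)
    have s2: "(-1::real) ^ length L * (-1) ^ length L = 1"
      by (simp flip: power_add add: mult_2[symmetric] power_mult)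
    show ?thesis
    proof
      fix C
      have "cl_mult (cl_alpha (prodL L)) (cl_vec w) C =
        ((-1) ^ length L * (-1) ^ (length L - 1)) * cl_mult (cl_vec p) (prodL L) C +
        ((-1) ^ length L * (-1) ^ length L) * cl_mult (cl_vec q) (prodL L) C"
        unfolding cl_alpha_prodL w cl_vec_add cl_mult_add_right cl_mult_smul_left Pp Pq by (simp add: algebra_simps)
      also have "\<dots> = cl_mult (cl_vec (M *v w)) (prodL L) C"
        unfolding s s2 w matrix_vector_right_distrib Mp q cl_vec_add cl_vec_neg
        by (simp add: cl_mult_add_left cl_mult_neg_left cl_mult_diff_left)
      finally show "cl_mult (cl_alpha (prodL L)) (cl_vec w) C = cl_mult (cl_vec (M *v w)) (prodL L) C" .
    qed
  qed
qed

lemma c_prop: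
  assumes "pin (c::'d::{finite,linorder} cliff)" "cl_mult c c = cl_one" "cl_rho c = M" "M ** M = mat 1"
    and oL: "orthl L" and eig: "\<forall>f\<in>set L. M *v f = - f"
    and dec: "\<And>w. \<exists>p q. w = p + q \<and> p \<in> span (set L) \<and> M *v q = q \<and> (\<forall>f\<in>set L. f \<bullet> q = 0)"
  shows "\<exists>\<mu>. c = (\<lambda>A. \<mu> * prodL L A)"
proof -
  define y where "y = prodL (rev L)"
  have Y: "cl_mult (cl_alpha y) (cl_vec w) = cl_mult (cl_vec (M *v w)) y" for w
    unfolding y_def by (rule y_relation) (use orthl_rev[OF oL] eig dec in auto)
  have Cr: "cl_mult (cl_alpha c) (cl_vec w) = cl_mult (cl_vec (M *v w)) c" for w
    by (rule rho_relation[OF assms(1-3)])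
  define z where "z = cl_mult c y"
  have "cl_mult (cl_alpha z) (cl_vec (axis j 1)) = cl_mult (cl_vec (axis j 1)) z" for j
  proof -
    have "cl_mult (cl_alpha z) (cl_vec (axis j 1)) = cl_mult (cl_mult (cl_alpha c) (cl_vec (M *v axis j 1))) y"
      unfolding z_def cl_alpha_mult by (simp add: cl_mult_assoc Y)
    also have "\<dots> = cl_mult (cl_vec (axis j 1)) z"
      unfolding Cr z_def by (simp add: cl_mult_assoc matrix_vector_mul_assoc assms(4))
    finally show ?thesis .
  qed
  then have zs: "z = (\<lambda>A. z {} * cl_one A)" by (rule kernel_scalar)
  have yL: "cl_mult y (prodL L) = (\<lambda>C. (-1) ^ length L * cl_one C)"
    unfolding y_def using prodL_rev[of "rev L"] oL unfolding orthl_def by simp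
  have e1: "cl_mult z (prodL L) = (\<lambda>C. (-1) ^ length L * c C)"
    unfolding z_def cl_mult_assoc yL cl_mult_smul_right' cl_mult_one_right ..
  have e2: "cl_mult z (prodL L) = (\<lambda>C. z {} * prodL L C)"
    by (subst zs) (simp add: cl_mult_smul_left' cl_mult_one_left)
  have s2: "(-1::real) ^ length L * (-1) ^ length L = 1"
    by (simp flip: power_add add: mult_2[symmetric] power_mult)
  have "c = (\<lambda>A. ((-1) ^ length L * z {}) * prodL L A)"
  proof
    fix A
    have "(-1) ^ length L * c A = z {} * prodL L A" using e1 e2 by metis
    then have "((-1) ^ length L * (-1) ^ length L) * c A = (-1) ^ length L * (z {} * prodL L A)"
      by (metis mult.assoc)
    then show "c A = ((-1) ^ length L * z {}) * prodL L A" unfolding s2 by (simp add: mult_ac)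
  qed
  then show ?thesis by blast
qed



lemma ortho_list_of_subspace:
  fixes S :: "(real^'d::{finite,linorder}) set"
  assumes "subspace S"
  shows "\<exists>L. orthl L \<and> set L \<subseteq> S \<and> span (set L) = S"
proof -
  obtain B where B: "B \<subseteq> S" "pairwise orthogonal B" "\<And>x. x \<in> B \<Longrightarrow> norm x = 1"
    "independent B" "span B = S"
    using orthonormal_basis_subspace[OF assms] by metis
  have "finite B" using B(4) by (rule independent_imp_finite)
  then obtain L where L: "set L = B" "distinct L" using finite_distinct_list by blast
  have "orthl L" unfolding orthl_def using L B(2,3) by (auto simp: pairwise_def orthogonal_def)
  then show ?thesis using L B by blast
qed

lemma orth_expand:
  fixes x :: "real^'d::{finite,linorder}"
  assumes oL: "orthl L" and sp: "span (set L) = UNIV"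
  shows "x = (\<Sum>f\<in>set L. (x \<bullet> f) *\<^sub>R f)"
proof -
  define d where "d = x - (\<Sum>f\<in>set L. (x \<bullet> f) *\<^sub>R f)"
  have "orthogonal d g" if g: "g \<in> set L" for g
  proof -
    have "(\<Sum>f\<in>set L. (x \<bullet> f) *\<^sub>R f) \<bullet> g = (\<Sum>f\<in>set L. (x \<bullet> f) * (f \<bullet> g))"
      by (simp add: inner_sum_left)
    also have "\<dots> = (\<Sum>f\<in>set L. if f = g then x \<bullet> g else 0)"
    proof (rule sum.cong[OF refl])
      fix f assume f: "f \<in> set L"
      show "(x \<bullet> f) * (f \<bullet> g) = (if f = g then x \<bullet> g else 0)"
      proof (cases "f = g")
        case True
        then have "f \<bullet> g = 1" using oL f unfolding orthl_def by (simp add: power2_norm_eq_inner[symmetric])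
        then show ?thesis using True by simp
      next
        case False
        then show ?thesis using oL f g unfolding orthl_def by auto
      qed
    qed
    also have "\<dots> = x \<bullet> g" using g by simp
    finally show ?thesis unfolding d_def orthogonal_def by (simp add: inner_diff_left)
  qed
  then have "orthogonal d d" using orthogonal_to_span[of d "set L" d] sp by auto
  then show ?thesis unfolding d_def orthogonal_self by simp
qed

lemma trace_basis:
  fixes L :: "(real^'d::{finite,linorder}) list" and M :: "real^('d::{finite,linorder})^('d::{finite,linorder})"
  assumes oL: "orthl L" and sp: "span (set L) = UNIV"
  shows "trace M = (\<Sum>f\<in>set L. f \<bullet> (M *v f))"
proof -
  have Mii: "M $ i $ i = (\<Sum>f\<in>set L. f $ i * (M *v f) $ i)" for i
  proof -
    have ax: "axis i 1 = (\<Sum>f\<in>set L. (f $ i) *\<^sub>R f)"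
    proof -
      have e: "axis i 1 \<bullet> f = f $ i" for f :: "real^('d::{finite,linorder})" by (simp add: inner_axis')
      show ?thesis using orth_expand[OF oL sp, of "axis i 1"] unfolding e .
    qed
    have "M $ i $ i = (M *v axis i 1) $ i" by (simp add: matrix_vector_mult_basis column_def)
    also have "\<dots> = (\<Sum>k\<in>UNIV. M $ i $ k * (\<Sum>f\<in>set L. f $ i * f $ k))"
      by (subst ax) (simp add: matrix_vector_mult_def)
    also have "\<dots> = (\<Sum>k\<in>UNIV. \<Sum>f\<in>set L. f $ i * (M $ i $ k * f $ k))"
      by (simp add: sum_distrib_left mult_ac)
    also have "\<dots> = (\<Sum>f\<in>set L. \<Sum>k\<in>UNIV. f $ i * (M $ i $ k * f $ k))"
      by (rule sum.swap)
    also have "\<dots> = (\<Sum>f\<in>set L. f $ i * (\<Sum>k\<in>UNIV. M $ i $ k * f $ k))"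
      by (simp add: sum_distrib_left)
    also have "\<dots> = (\<Sum>f\<in>set L. f $ i * (M *v f) $ i)"
      by (simp add: matrix_vector_mult_def)
    finally show ?thesis .
  qed
  have "trace M = (\<Sum>i\<in>UNIV. \<Sum>f\<in>set L. f $ i * (M *v f) $ i)"
    unfolding trace_def Mii ..
  also have "\<dots> = (\<Sum>f\<in>set L. \<Sum>i\<in>UNIV. f $ i * (M *v f) $ i)"
    by (rule sum.swap)
  also have "\<dots> = (\<Sum>f\<in>set L. f \<bullet> (M *v f))"
    by (simp add: inner_vec_def)
  finally show ?thesis .
qed

lemma eig_orth:
  fixes M :: "real^'n^'n"
  assumes "transpose M = M" "M *v v = a *\<^sub>R v" "M *v w = b *\<^sub>R w" "a \<noteq> b"
  shows "v \<bullet> w = 0"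
proof -
  have "(M *v v) \<bullet> w = v \<bullet> (M *v w)" by (rule symm_inner[OF assms(1)])
  then have "a * (v \<bullet> w) = b * (v \<bullet> w)" using assms(2,3) by simp
  then show ?thesis using assms(4) by simp
qed

definition proj :: "real \<Rightarrow> real^'n^'n \<Rightarrow> real^'n \<Rightarrow> real^'n" where
  "proj a M w = (1/2) *\<^sub>R (w + a *\<^sub>R (M *v w))"

lemma proj_eig:
  assumes "M ** M = mat 1" "a * a = 1"
  shows "M *v proj a M w = a *\<^sub>R proj a M w"
proof -
  have "M *v proj a M w = (1/2) *\<^sub>R (M *v w + a *\<^sub>R ((M ** M) *v w))"
    unfolding proj_def by (simp add: matrix_vector_right_distrib matrix_vector_mult_scaleR matrix_vector_mul_assoc)
  also have "\<dots> = a *\<^sub>R proj a M w"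
  proof -
    have "a = 1 \<or> a = -1" using assms(2) by (metis square_eq_1_iff)
    then show ?thesis unfolding proj_def assms(1) by (auto simp: vec_eq_iff field_simps)
  qed
  finally show ?thesis .
qed

lemma proj_comm:
  assumes "M ** N = N ** M" "N *v w = b *\<^sub>R w"
  shows "N *v proj a M w = b *\<^sub>R proj a M w"
proof -
  have "N *v (M *v w) = M *v (N *v w)" by (simp add: matrix_vector_mul_assoc assms(1))
  then show ?thesis unfolding proj_def using assms(2)
    by (simp add: matrix_vector_right_distrib matrix_vector_mult_scaleR algebra_simps)
qed

lemma proj_comm':
  assumes "M ** N = N ** M"
  shows "N *v proj a M w = proj a M (N *v w)"
proof -
  have "N *v (M *v w) = M *v (N *v w)" by (simp add: matrix_vector_mul_assoc assms(1))
  then show ?thesis unfolding proj_def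
    by (simp add: matrix_vector_right_distrib matrix_vector_mult_scaleR)
qed

lemma proj_sum: "proj 1 M w + proj (-1) M w = w"
  unfolding proj_def by (simp add: vec_eq_iff field_simps)



lemma orthl_append:
  assumes "orthl P" "orthl Q" "\<forall>v\<in>set P. \<forall>w\<in>set Q. v \<bullet> w = 0"
  shows "orthl (P @ Q)"
proof -
  have "set P \<inter> set Q = {}"
  proof (rule ccontr)
    assume "set P \<inter> set Q \<noteq> {}"
    then obtain v where "v \<in> set P" "v \<in> set Q" by blast
    then have "v \<bullet> v = 0" "norm v = 1" using assms unfolding orthl_def by auto
    then show False by simp
  qed
  then show ?thesis using assms unfolding orthl_def by auto (metis inner_commute)+
qed

lemma sum_eig:
  assumes "orthl L" "\<forall>f\<in>set L. M *v f = k *\<^sub>R f"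
  shows "(\<Sum>f\<in>set L. f \<bullet> (M *v f)) = k * real (length L)"
proof -
  have "(\<Sum>f\<in>set L. f \<bullet> (M *v f)) = (\<Sum>f\<in>set L. k)"
  proof (rule sum.cong[OF refl])
    fix f assume f: "f \<in> set L"
    then have "norm f = 1" using assms(1) unfolding orthl_def by auto
    then have "f \<bullet> f = 1" by (simp add: power2_norm_eq_inner[symmetric])
    then show "f \<bullet> (M *v f) = k" using assms(2) f by simp
  qed
  also have "\<dots> = k * real (length L)" using assms(1) unfolding orthl_def by (simp add: distinct_card)
  finally show ?thesis .
qed

lemma prodL_nonzero:
  fixes L :: "(real^'d::{finite,linorder}) list"
  assumes "\<forall>v\<in>set L. norm v = 1"
  shows "\<exists>C. prodL L C \<noteq> 0"
proof (rule ccontr)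
  assume "\<not> (\<exists>C. prodL L C \<noteq> 0)"
  then have z: "prodL L = (\<lambda>A. 0)" by auto
  have "cl_mult (prodL L) (prodL (rev L)) {} = (-1) ^ length L * (cl_one::'d cliff) {}"
    using prodL_rev[OF assms] by simp
  moreover have "cl_mult (prodL L) (prodL (rev L)) {} = 0" unfolding z by (rule cl_mult_zero_left)
  ultimately show False by (simp add: cl_one_def)
qed

lemma neg1_eq_iff: "((-1::real) ^ a = (-1) ^ b) \<longleftrightarrow> (even a \<longleftrightarrow> even b)"
  by (cases "even a"; cases "even b") auto

lemma main_abstract:
  fixes M1 M2 :: "real^('d::{finite,linorder})^('d::{finite,linorder})" and c1 c2 :: "'d cliff"
  assumes T1: "transpose M1 = M1" and T2: "transpose M2 = M2"
    and S1: "M1 ** M1 = mat 1" and S2: "M2 ** M2 = mat 1" and C12: "M1 ** M2 = M2 ** M1"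
    and c1: "pin c1" "cl_mult c1 c1 = cl_one" "cl_rho c1 = M1"
    and c2: "pin c2" "cl_mult c2 c2 = cl_one" "cl_rho c2 = M2"
    and tr: "trace M1 = trace M2"
  shows "cl_mult c1 c2 = cl_mult c2 c1 \<longleftrightarrow>
    (\<exists>m::int. (trace (mat 1 :: real^('d::{finite,linorder})^('d::{finite,linorder})) - trace (M1 ** M2)) / 2 = 4 * of_int m)"
proof -
  define X where "X a b = {w. M1 *v w = a *\<^sub>R w \<and> M2 *v w = b *\<^sub>R w}" for a b :: real
  have subX: "subspace (X a b)" for a b
    unfolding subspace_def X_def by (auto simp: matrix_vector_right_distrib matrix_vector_mult_scaleR scaleR_add_right)
  have XO: "u \<bullet> v = 0" if "u \<in> X a b" "v \<in> X a' b'" "a \<noteq> a' \<or> b \<noteq> b'" for u v a b a' b'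
    using that eig_orth[OF T1, of u a v a'] eig_orth[OF T2, of u b v b'] unfolding X_def by auto
  obtain LA where LA: "orthl LA" "set LA \<subseteq> X (-1) (-1)" "span (set LA) = X (-1) (-1)"
    using ortho_list_of_subspace[OF subX] by blast
  obtain LB where LB: "orthl LB" "set LB \<subseteq> X (-1) 1" "span (set LB) = X (-1) 1"
    using ortho_list_of_subspace[OF subX] by blast
  obtain LC where LC: "orthl LC" "set LC \<subseteq> X 1 (-1)" "span (set LC) = X 1 (-1)"
    using ortho_list_of_subspace[OF subX] by blast
  obtain LD where LD: "orthl LD" "set LD \<subseteq> X 1 1" "span (set LD) = X 1 1"
    using ortho_list_of_subspace[OF subX] by blast
  have C21: "M2 ** M1 = M1 ** M2" using C12 by simp
  have projX: "proj b M2 (proj a M1 w) \<in> X a b" if "a * a = 1" "b * b = 1" for a b w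
  proof -
    have "M1 *v proj a M1 w = a *\<^sub>R proj a M1 w" by (rule proj_eig[OF S1 that(1)])
    then have "M1 *v proj b M2 (proj a M1 w) = a *\<^sub>R proj b M2 (proj a M1 w)"
      by (rule proj_comm[OF C21])
    moreover have "M2 *v proj b M2 (proj a M1 w) = b *\<^sub>R proj b M2 (proj a M1 w)"
      by (rule proj_eig[OF S2 that(2)])
    ultimately show ?thesis unfolding X_def by simp
  qed
  define wA where "wA w = proj (-1) M2 (proj (-1) M1 w)" for w
  define wB where "wB w = proj 1 M2 (proj (-1) M1 w)" for w
  define wC where "wC w = proj (-1) M2 (proj 1 M1 w)" for w
  define wD where "wD w = proj 1 M2 (proj 1 M1 w)" for w
  have wX: "wA w \<in> X (-1) (-1)" "wB w \<in> X (-1) 1" "wC w \<in> X 1 (-1)" "wD w \<in> X 1 1" for w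
    unfolding wA_def wB_def wC_def wD_def by (auto intro: projX)
  have wsum: "w = wA w + wB w + wC w + wD w" for w
  proof -
    have "w = proj 1 M1 w + proj (-1) M1 w" by (simp add: proj_sum)
    also have "\<dots> = (proj 1 M2 (proj 1 M1 w) + proj (-1) M2 (proj 1 M1 w)) + (proj 1 M2 (proj (-1) M1 w) + proj (-1) M2 (proj (-1) M1 w))"
      by (simp add: proj_sum)
    finally show ?thesis unfolding wA_def wB_def wC_def wD_def by (simp add: algebra_simps)
  qed
  have inX: "set LA \<subseteq> X (-1) (-1)" "set LB \<subseteq> X (-1) 1" "set LC \<subseteq> X 1 (-1)" "set LD \<subseteq> X 1 1"
    using LA LB LC LD by auto
  have ne: "(1::real) \<noteq> -1" by simp
  have oXY: "\<And>P Q a b a' b'. set P \<subseteq> X a b \<Longrightarrow> set Q \<subseteq> X a' b' \<Longrightarrow> a \<noteq> a' \<or> b \<noteq> b' \<Longrightarrow>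
     \<forall>v\<in>set P. \<forall>w\<in>set Q. v \<bullet> w = 0" using XO by blast
  have oAB: "\<forall>v\<in>set LA. \<forall>w\<in>set LB. v \<bullet> w = 0" by (rule oXY[OF inX(1) inX(2)]) simp
  have oAC: "\<forall>v\<in>set LA. \<forall>w\<in>set LC. v \<bullet> w = 0" by (rule oXY[OF inX(1) inX(3)]) simp
  have oAD: "\<forall>v\<in>set LA. \<forall>w\<in>set LD. v \<bullet> w = 0" by (rule oXY[OF inX(1) inX(4)]) simp
  have oBC: "\<forall>v\<in>set LB. \<forall>w\<in>set LC. v \<bullet> w = 0" by (rule oXY[OF inX(2) inX(3)]) simp
  have oBD: "\<forall>v\<in>set LB. \<forall>w\<in>set LD. v \<bullet> w = 0" by (rule oXY[OF inX(2) inX(4)]) simp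
  have oCD: "\<forall>v\<in>set LC. \<forall>w\<in>set LD. v \<bullet> w = 0" by (rule oXY[OF inX(3) inX(4)]) simp
  have oCB: "\<forall>v\<in>set LC. \<forall>w\<in>set LB. v \<bullet> w = 0" using oBC by (metis inner_commute)
  have oBA: "\<forall>v\<in>set LB. \<forall>w\<in>set LA. v \<bullet> w = 0" using oAB by (metis inner_commute)
  have oCA: "\<forall>v\<in>set LC. \<forall>w\<in>set LA. v \<bullet> w = 0" using oAC by (metis inner_commute)
  have o1: "orthl (LA @ LB)" by (rule orthl_append[OF LA(1) LB(1) oAB])
  obtain \<mu>1 where mu1: "c1 = (\<lambda>A. \<mu>1 * prodL (LA @ LB) A)"
  proof -
    have "\<exists>\<mu>. c1 = (\<lambda>A. \<mu> * prodL (LA @ LB) A)"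
    proof (rule c_prop[OF c1 S1 o1])
      show "\<forall>f\<in>set (LA @ LB). M1 *v f = - f" using inX unfolding X_def by auto
      fix w
      have p: "wA w + wB w \<in> span (set (LA @ LB))"
        by (metis LA(3) LB(3) set_append span_add span_mono sup_ge1 sup_ge2 subsetD wX(1,2))
      have q: "M1 *v (wC w + wD w) = wC w + wD w"
        using wX(3,4)[of w] unfolding X_def by (simp add: matrix_vector_right_distrib)
      have qo: "\<forall>f\<in>set (LA @ LB). f \<bullet> (wC w + wD w) = 0"
      proof
        fix f assume "f \<in> set (LA @ LB)"
        then have "f \<in> X (-1) (-1) \<or> f \<in> X (-1) 1" using inX by auto
        then obtain b where fb: "f \<in> X (-1) b" by blast
        have "f \<bullet> wC w = 0" by (rule XO[OF fb wX(3)]) simp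
        moreover have "f \<bullet> wD w = 0" by (rule XO[OF fb wX(4)]) simp
        ultimately show "f \<bullet> (wC w + wD w) = 0" by (simp add: inner_add_right)
      qed
      show "\<exists>p q. w = p + q \<and> p \<in> span (set (LA @ LB)) \<and> M1 *v q = q \<and> (\<forall>f\<in>set (LA @ LB). f \<bullet> q = 0)"
        using p q qo wsum[of w] by (metis add.assoc)
    qed
    then show ?thesis using that by blast
  qed
  have o2: "orthl (LA @ LC)" by (rule orthl_append[OF LA(1) LC(1) oAC])
  obtain \<mu>2 where mu2: "c2 = (\<lambda>A. \<mu>2 * prodL (LA @ LC) A)"
  proof -
    have "\<exists>\<mu>. c2 = (\<lambda>A. \<mu> * prodL (LA @ LC) A)"
    proof (rule c_prop[OF c2 S2 o2])
      show "\<forall>f\<in>set (LA @ LC). M2 *v f = - f" using inX unfolding X_def by auto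
      fix w
      have p: "wA w + wC w \<in> span (set (LA @ LC))"
        by (metis LA(3) LC(3) set_append span_add span_mono sup_ge1 sup_ge2 subsetD wX(1,3))
      have q: "M2 *v (wB w + wD w) = wB w + wD w"
        using wX(2,4)[of w] unfolding X_def by (simp add: matrix_vector_right_distrib)
      have qo: "\<forall>f\<in>set (LA @ LC). f \<bullet> (wB w + wD w) = 0"
      proof
        fix f assume "f \<in> set (LA @ LC)"
        then have "f \<in> X (-1) (-1) \<or> f \<in> X 1 (-1)" using inX by auto
        then obtain a where fa: "f \<in> X a (-1)" by blast
        have "f \<bullet> wB w = 0" by (rule XO[OF fa wX(2)]) simp
        moreover have "f \<bullet> wD w = 0" by (rule XO[OF fa wX(4)]) simp
        ultimately show "f \<bullet> (wB w + wD w) = 0" by (simp add: inner_add_right)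
      qed
      have "w = (wA w + wC w) + (wB w + wD w)" using wsum[of w] by (simp add: algebra_simps)
      then show "\<exists>p q. w = p + q \<and> p \<in> span (set (LA @ LC)) \<and> M2 *v q = q \<and> (\<forall>f\<in>set (LA @ LC). f \<bullet> q = 0)"
        using p q qo by blast
    qed
    then show ?thesis using that by blast
  qed
  define p where "p = length LA"
  define q where "q = length LB"
  define r where "r = length LC"
  define s where "s = length LD"
  have oCDl: "orthl (LC @ LD)" by (rule orthl_append[OF LC(1) LD(1) oCD])
  have oBCDl: "orthl (LB @ LC @ LD)" by (rule orthl_append[OF LB(1) oCDl]) (use oBC oBD in auto)
  have oall: "orthl (LA @ LB @ LC @ LD)" by (rule orthl_append[OF LA(1) oBCDl]) (use oAB oAC oAD in auto)
  have spall: "span (set (LA @ LB @ LC @ LD)) = UNIV"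
  proof -
    have "w \<in> span (set (LA @ LB @ LC @ LD))" for w
    proof -
      have "wA w \<in> span (set (LA @ LB @ LC @ LD))" using wX(1)[of w] LA(3) span_mono[of "set LA" "set (LA @ LB @ LC @ LD)"] by auto
      moreover have "wB w \<in> span (set (LA @ LB @ LC @ LD))" using wX(2)[of w] LB(3) span_mono[of "set LB" "set (LA @ LB @ LC @ LD)"] by auto
      moreover have "wC w \<in> span (set (LA @ LB @ LC @ LD))" using wX(3)[of w] LC(3) span_mono[of "set LC" "set (LA @ LB @ LC @ LD)"] by auto
      moreover have "wD w \<in> span (set (LA @ LB @ LC @ LD))" using wX(4)[of w] LD(3) span_mono[of "set LD" "set (LA @ LB @ LC @ LD)"] by auto
      ultimately show ?thesis using wsum[of w] by (metis span_add)
    qed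
    then show ?thesis by auto
  qed
  have dall: "distinct (LA @ LB @ LC @ LD)" using oall unfolding orthl_def by simp
  have trsplit: "trace M = (\<Sum>f\<in>set LA. f \<bullet> (M *v f)) + (\<Sum>f\<in>set LB. f \<bullet> (M *v f)) +
      (\<Sum>f\<in>set LC. f \<bullet> (M *v f)) + (\<Sum>f\<in>set LD. f \<bullet> (M *v f))" for M
  proof -
    have dA: "distinct LA" and dB: "distinct LB" and dC: "distinct LC" and dD: "distinct LD"
      using dall by auto
    have "trace M = (\<Sum>f\<in>set (LA @ LB @ LC @ LD). f \<bullet> (M *v f))" by (rule trace_basis[OF oall spall])
    also have "\<dots> = sum_list (map (\<lambda>f. f \<bullet> (M *v f)) (LA @ LB @ LC @ LD))"
      by (rule sum_list_distinct_conv_sum_set[OF dall, symmetric])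
    also have "\<dots> = (\<Sum>f\<in>set LA. f \<bullet> (M *v f)) + (\<Sum>f\<in>set LB. f \<bullet> (M *v f)) +
      (\<Sum>f\<in>set LC. f \<bullet> (M *v f)) + (\<Sum>f\<in>set LD. f \<bullet> (M *v f))"
      by (simp add: sum_list_distinct_conv_sum_set[OF dA] sum_list_distinct_conv_sum_set[OF dB]
        sum_list_distinct_conv_sum_set[OF dC] sum_list_distinct_conv_sum_set[OF dD])
    finally show ?thesis .
  qed
  have ev: "M1 *v f = a *\<^sub>R f \<and> M2 *v f = b *\<^sub>R f \<and> (M1 ** M2) *v f = (a * b) *\<^sub>R f \<and> mat 1 *v f = 1 *\<^sub>R f"
    if "f \<in> X a b" for f a b
    using that unfolding X_def by (simp add: matrix_vector_mul_assoc[symmetric] matrix_vector_mult_scaleR)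
  have evA: "\<forall>f\<in>set LA. M1 *v f = (-1) *\<^sub>R f \<and> M2 *v f = (-1) *\<^sub>R f \<and> (M1 ** M2) *v f = 1 *\<^sub>R f \<and> mat 1 *v f = 1 *\<^sub>R f"
    using ev[of _ "-1" "-1"] inX(1) by auto
  have evB: "\<forall>f\<in>set LB. M1 *v f = (-1) *\<^sub>R f \<and> M2 *v f = 1 *\<^sub>R f \<and> (M1 ** M2) *v f = (-1) *\<^sub>R f \<and> mat 1 *v f = 1 *\<^sub>R f"
    using ev[of _ "-1" "1"] inX(2) by auto
  have evC: "\<forall>f\<in>set LC. M1 *v f = 1 *\<^sub>R f \<and> M2 *v f = (-1) *\<^sub>R f \<and> (M1 ** M2) *v f = (-1) *\<^sub>R f \<and> mat 1 *v f = 1 *\<^sub>R f"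
    using ev[of _ "1" "-1"] inX(3) by auto
  have evD: "\<forall>f\<in>set LD. M1 *v f = 1 *\<^sub>R f \<and> M2 *v f = 1 *\<^sub>R f \<and> (M1 ** M2) *v f = 1 *\<^sub>R f \<and> mat 1 *v f = 1 *\<^sub>R f"
    using ev[of _ "1" "1"] inX(4) by auto
  have tr1: "trace M1 = - real p - real q + real r + real s"
    unfolding trsplit p_def q_def r_def s_def
    using sum_eig[OF LA(1), of M1 "-1"] sum_eig[OF LB(1), of M1 "-1"] sum_eig[OF LC(1), of M1 1] sum_eig[OF LD(1), of M1 1]
      evA evB evC evD by auto
  have tr2: "trace M2 = - real p + real q - real r + real s"
    unfolding trsplit p_def q_def r_def s_def
    using sum_eig[OF LA(1), of M2 "-1"] sum_eig[OF LB(1), of M2 "1"] sum_eig[OF LC(1), of M2 "-1"] sum_eig[OF LD(1), of M2 1]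
      evA evB evC evD by auto
  have tr12: "trace (M1 ** M2) = real p - real q - real r + real s"
    unfolding trsplit p_def q_def r_def s_def
    using sum_eig[OF LA(1), of "M1 ** M2" "1"] sum_eig[OF LB(1), of "M1 ** M2" "-1"] sum_eig[OF LC(1), of "M1 ** M2" "-1"] sum_eig[OF LD(1), of "M1 ** M2" 1]
      evA evB evC evD by auto
  have trI: "trace (mat 1 :: real^('d::{finite,linorder})^('d::{finite,linorder})) = real p + real q + real r + real s"
    unfolding trsplit p_def q_def r_def s_def
    using sum_eig[OF LA(1), of "mat 1" "1"] sum_eig[OF LB(1), of "mat 1" "1"] sum_eig[OF LC(1), of "mat 1" "1"] sum_eig[OF LD(1), of "mat 1" 1]
      evA evB evC evD by auto
  have rq: "r = q" using tr tr1 tr2 by simp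
  have hval: "(trace (mat 1 :: real^('d::{finite,linorder})^('d::{finite,linorder})) - trace (M1 ** M2)) / 2 = 2 * real q"
    unfolding trI tr12 rq by simp
  define X0 where "X0 = cl_mult (prodL LA) (cl_mult (prodL LA) (cl_mult (prodL LB) (prodL LC)))"
  have e1: "cl_mult (prodL (LA @ LB)) (prodL (LA @ LC)) = (\<lambda>C. (-1) ^ (q * p) * X0 C)"
  proof -
    have "cl_mult (prodL LB) (cl_mult (prodL LA) (prodL LC)) = cl_mult (cl_mult (prodL LB) (prodL LA)) (prodL LC)"
      by (simp add: cl_mult_assoc)
    also have "\<dots> = (\<lambda>C. (-1) ^ (q * p) * cl_mult (cl_mult (prodL LA) (prodL LB)) (prodL LC) C)"
      unfolding prodL_comm[OF oBA] q_def p_def by (simp add: cl_mult_smul_left')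
    finally have h: "cl_mult (prodL LB) (cl_mult (prodL LA) (prodL LC)) = (\<lambda>C. (-1) ^ (q * p) * cl_mult (cl_mult (prodL LA) (prodL LB)) (prodL LC) C)" .
    show ?thesis unfolding prodL_append X0_def
      by (simp add: cl_mult_assoc h cl_mult_smul_right' del: prodL.simps)
  qed
  have e2: "cl_mult (prodL (LA @ LC)) (prodL (LA @ LB)) = (\<lambda>C. ((-1) ^ (r * p) * (-1) ^ (r * q)) * X0 C)"
  proof -
    have "cl_mult (prodL LC) (cl_mult (prodL LA) (prodL LB)) = cl_mult (cl_mult (prodL LC) (prodL LA)) (prodL LB)"
      by (simp add: cl_mult_assoc)
    also have "\<dots> = (\<lambda>C. (-1) ^ (r * p) * cl_mult (prodL LA) (cl_mult (prodL LC) (prodL LB)) C)"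
      unfolding prodL_comm[OF oCA] r_def p_def by (simp add: cl_mult_smul_left' cl_mult_assoc)
    also have "\<dots> = (\<lambda>C. ((-1) ^ (r * p) * (-1) ^ (r * q)) * cl_mult (prodL LA) (cl_mult (prodL LB) (prodL LC)) C)"
      unfolding prodL_comm[OF oCB] r_def q_def by (simp add: cl_mult_smul_right' mult.assoc)
    finally have h: "cl_mult (prodL LC) (cl_mult (prodL LA) (prodL LB)) = (\<lambda>C. ((-1) ^ (r * p) * (-1) ^ (r * q)) * cl_mult (prodL LA) (cl_mult (prodL LB) (prodL LC)) C)" .
    show ?thesis unfolding prodL_append X0_def
      by (simp add: cl_mult_assoc h cl_mult_smul_right' del: prodL.simps)
  qed
  have X0L: "X0 = prodL (LA @ LA @ LB @ LC)" unfolding X0_def prodL_append ..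
  have "\<forall>v\<in>set (LA @ LA @ LB @ LC). norm v = 1" using LA(1) LB(1) LC(1) unfolding orthl_def by auto
  then obtain C0 where C0: "X0 C0 \<noteq> 0"
    using prodL_nonzero[of "LA @ LA @ LB @ LC"] unfolding X0L by blast
  have mu_nz: "\<mu> \<noteq> 0" if "c = (\<lambda>A. \<mu> * P A)" "cl_mult c c = cl_one" for \<mu> c and P :: "'d cliff"
  proof
    assume "\<mu> = 0"
    then have "c = (\<lambda>A. 0)" using that by simp
    then have "cl_mult c c {} = 0" by (simp add: cl_mult_zero_left)
    then show False using that(2) by (simp add: cl_one_def)
  qed
  have m1: "\<mu>1 \<noteq> 0" by (rule mu_nz[OF mu1 c1(2)])
  have m2: "\<mu>2 \<noteq> 0" by (rule mu_nz[OF mu2 c2(2)])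
  have "cl_mult c1 c2 = cl_mult c2 c1 \<longleftrightarrow>
    (\<lambda>C. \<mu>1 * (\<mu>2 * ((-1) ^ (q * p) * X0 C))) = (\<lambda>C. \<mu>2 * (\<mu>1 * (((-1) ^ (r * p) * (-1) ^ (r * q)) * X0 C)))"
    unfolding mu1 mu2 cl_mult_smul_left' cl_mult_smul_right' e1 e2 ..
  also have "\<dots> \<longleftrightarrow> ((-1::real) ^ (q * p) = (-1) ^ (r * p) * (-1) ^ (r * q))"
  proof
    assume "(\<lambda>C. \<mu>1 * (\<mu>2 * ((-1) ^ (q * p) * X0 C))) = (\<lambda>C. \<mu>2 * (\<mu>1 * (((-1) ^ (r * p) * (-1) ^ (r * q)) * X0 C)))"
    then have "\<mu>1 * \<mu>2 * X0 C0 * (-1) ^ (q * p) = \<mu>1 * \<mu>2 * X0 C0 * ((-1) ^ (r * p) * (-1) ^ (r * q))"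
      by (metis (no_types, lifting) mult.assoc mult.commute mult.left_commute)
    moreover have "\<mu>1 * \<mu>2 * X0 C0 \<noteq> 0" using m1 m2 C0 by simp
    ultimately show "(-1::real) ^ (q * p) = (-1) ^ (r * p) * (-1) ^ (r * q)" by simp
  next
    assume "(-1::real) ^ (q * p) = (-1) ^ (r * p) * (-1) ^ (r * q)"
    then show "(\<lambda>C. \<mu>1 * (\<mu>2 * ((-1) ^ (q * p) * X0 C))) = (\<lambda>C. \<mu>2 * (\<mu>1 * (((-1) ^ (r * p) * (-1) ^ (r * q)) * X0 C)))"
      by (simp add: mult_ac)
  qed
  also have "\<dots> \<longleftrightarrow> even q"
    unfolding rq power_add[symmetric] neg1_eq_iff by auto
  also have "\<dots> \<longleftrightarrow> (\<exists>m::int. (trace (mat 1 :: real^('d::{finite,linorder})^('d::{finite,linorder})) - trace (M1 ** M2)) / 2 = 4 * of_int m)"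
  proof
    assume "even q"
    then obtain t where "q = 2 * t" by blast
    then show "\<exists>m::int. (trace (mat 1 :: real^('d::{finite,linorder})^('d::{finite,linorder})) - trace (M1 ** M2)) / 2 = 4 * of_int m"
      unfolding hval by (intro exI[of _ "int t"]) simp
  next
    assume "\<exists>m::int. (trace (mat 1 :: real^('d::{finite,linorder})^('d::{finite,linorder})) - trace (M1 ** M2)) / 2 = 4 * of_int m"
    then obtain m :: int where "2 * real q = 4 * of_int m" unfolding hval by blast
    then have "int q = 2 * m" by linarith
    then show "even q" by presburger
  qed
  finally show ?thesis .
qed



lemma adj_transp_permutes:
  assumes "1 \<le> i" "i + 1 \<le> n"
  shows "adj_transp i permutes {1..n}"
proof -
  have "adj_transp i = Transposition.transpose i (i + 1)"
    unfolding adj_transp_def Transposition.transpose_def by (auto simp: fun_eq_iff)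
  then show ?thesis using assms permutes_swap_id[of i "{1..n}" "i+1"] by simp
qed

lemma extend_perm:
  assumes "finite S" "A \<subseteq> S" "inj_on f A" "f ` A \<subseteq> S"
  shows "\<exists>g. g permutes S \<and> (\<forall>x\<in>A. g x = f x)"
proof -
  have fin: "finite A" using assms(1,2) finite_subset by blast
  have "card (S - A) = card (S - f ` A)"
    using assms fin by (simp add: card_Diff_subset card_image card_image_le finite_subset)
  then obtain h where h: "bij_betw h (S - A) (S - f ` A)"
    using finite_same_card_bij[of "S - A" "S - f ` A"] assms(1) by auto
  define g where "g x = (if x \<in> A then f x else if x \<in> S then h x else x)" for x
  have b1: "bij_betw g A (f ` A)"
    using assms(3) unfolding bij_betw_def inj_on_def g_def by (auto simp: image_def)
  have b2: "bij_betw g (S - A) (S - f ` A)"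
    using h unfolding g_def by (rule bij_betw_cong[THEN iffD1, rotated]) auto
  have "bij_betw g (A \<union> (S - A)) (f ` A \<union> (S - f ` A))"
    by (rule bij_betw_combine[OF b1 b2]) auto
  moreover have "A \<union> (S - A) = S" "f ` A \<union> (S - f ` A) = S" using assms(2,4) by auto
  ultimately have "bij_betw g S S" by simp
  then have "g permutes S" by (rule bij_imp_permutes) (use assms(2) in \<open>auto simp: g_def\<close>)
  then show ?thesis unfolding g_def by auto
qed

lemma conj_perm:
  assumes "n \<ge> 4" "1 \<le> i" "i + 1 \<le> n" "1 \<le> k" "k + 1 \<le> n" "i + 1 < k \<or> k + 1 < i"
  shows "\<exists>g. g permutes {1..n} \<and> adj_transp i \<circ> g = g \<circ> adj_transp 1 \<and> adj_transp k \<circ> g = g \<circ> adj_transp 3"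
proof -
  define f where "f x = (if x = 1 then i else if x = 2 then i + 1 else if x = 3 then k else k + 1)" for x :: nat
  have "inj_on f {1,2,3,4}" unfolding f_def inj_on_def using assms(6) by auto
  moreover have "f ` {1,2,3,4} \<subseteq> {1..n}" unfolding f_def using assms by auto
  moreover have "{1,2,3,4} \<subseteq> {1..n}" using assms(1) by auto
  ultimately obtain g where g: "g permutes {1..n}" "\<forall>x\<in>{1,2,3,4}. g x = f x"
    using extend_perm[of "{1..n}" "{1,2,3,4::nat}" f] by auto
  have g1: "g 1 = i" "g 2 = i + 1" "g 3 = k" "g 4 = k + 1" using g(2) unfolding f_def by auto
  have inj: "inj g" using permutes_inj[OF g(1)] .
  have "adj_transp i (g x) = g (adj_transp 1 x)" for x
  proof -
    have "x \<noteq> 1 \<Longrightarrow> g x \<noteq> i" "x \<noteq> 2 \<Longrightarrow> g x \<noteq> i + 1"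
      using inj_eq[OF inj, of x 1] inj_eq[OF inj, of x 2] g1 by auto
    then show ?thesis unfolding adj_transp_def using g1 by (auto simp: eval_nat_numeral)
  qed
  moreover have "adj_transp k (g x) = g (adj_transp 3 x)" for x
  proof -
    have "x \<noteq> 3 \<Longrightarrow> g x \<noteq> k" "x \<noteq> 4 \<Longrightarrow> g x \<noteq> k + 1"
      using inj_eq[OF inj, of x 3] inj_eq[OF inj, of x 4] g1 by auto
    then show ?thesis unfolding adj_transp_def using g1 by (auto simp: eval_nat_numeral)
  qed
  ultimately show ?thesis using g(1) by (auto simp: fun_eq_iff)
qed

lemma rep_id:
  assumes "orth_rep n \<pi>"
  shows "\<pi> id = mat 1"
proof -
  have o: "orthogonal_matrix (\<pi> id)" using assms permutes_id unfolding orth_rep_def by blast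
  have "\<pi> (id \<circ> id) = \<pi> id ** \<pi> id" using assms permutes_id unfolding orth_rep_def by blast
  then have h: "\<pi> id = \<pi> id ** \<pi> id" by simp
  have "mat 1 = transpose (\<pi> id) ** \<pi> id" using o unfolding orthogonal_matrix_def by simp
  also have "\<dots> = transpose (\<pi> id) ** (\<pi> id ** \<pi> id)" using h by simp
  also have "\<dots> = \<pi> id" by (simp add: matrix_mul_assoc \<open>mat 1 = transpose (\<pi> id) ** \<pi> id\<close>[symmetric])
  finally show ?thesis by simp
qed

lemma conj_trace:
  assumes "orth_rep n \<pi>" "g permutes {1..n}" "p permutes {1..n}" "p' permutes {1..n}" "p' \<circ> g = g \<circ> p"
  shows "trace (\<pi> p') = trace (\<pi> p)"
proof -
  have hom: "\<And>a b. a permutes {1..n} \<Longrightarrow> b permutes {1..n} \<Longrightarrow> \<pi> (a \<circ> b) = \<pi> a ** \<pi> b"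
    using assms(1) unfolding orth_rep_def by blast
  have ig: "inv g permutes {1..n}" by (rule permutes_inv[OF assms(2)])
  have "p' = p' \<circ> (g \<circ> inv g)" using permutes_inv_o(1)[OF assms(2)] by simp
  also have "\<dots> = (p' \<circ> g) \<circ> inv g" by (simp add: comp_assoc)
  also have "\<dots> = g \<circ> p \<circ> inv g" using assms(5) by simp
  finally have p': "p' = g \<circ> p \<circ> inv g" .
  have gp: "g \<circ> p permutes {1..n}" by (rule permutes_compose[OF assms(3) assms(2)])
  have "\<pi> p' = \<pi> (g \<circ> p) ** \<pi> (inv g)" unfolding p' by (rule hom[OF gp ig])
  also have "\<dots> = (\<pi> g ** \<pi> p) ** \<pi> (inv g)" unfolding hom[OF assms(2) assms(3)] ..
  finally have e: "\<pi> p' = \<pi> g ** (\<pi> p ** \<pi> (inv g))" by (simp only: matrix_mul_assoc)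
  have "trace (\<pi> p') = trace ((\<pi> p ** \<pi> (inv g)) ** \<pi> g)" unfolding e by (rule trace_mul_sym)
  also have "\<dots> = trace (\<pi> p ** (\<pi> (inv g) ** \<pi> g))" by (simp only: matrix_mul_assoc)
  also have "\<pi> (inv g) ** \<pi> g = \<pi> (inv g \<circ> g)" by (rule hom[OF ig assms(2), symmetric])
  also have "\<dots> = mat 1" using permutes_inv_o(2)[OF assms(2)] rep_id[OF assms(1)] by simp
  also have "trace (\<pi> p ** mat 1) = trace (\<pi> p)" by simp
  finally show ?thesis .
qed

lemma traces_conj:
  assumes "orth_rep n \<pi>" "n \<ge> 4" "1 \<le> i" "i + 1 \<le> n" "1 \<le> k" "k + 1 \<le> n" "i + 1 < k \<or> k + 1 < i"
  shows "trace (\<pi> (adj_transp i)) = trace (\<pi> (adj_transp 1))"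
    "trace (\<pi> (adj_transp k)) = trace (\<pi> (adj_transp 3))"
    "trace (\<pi> (adj_transp i \<circ> adj_transp k)) = trace (\<pi> (adj_transp 1 \<circ> adj_transp 3))"
proof -
  obtain g where g: "g permutes {1..n}" "adj_transp i \<circ> g = g \<circ> adj_transp 1" "adj_transp k \<circ> g = g \<circ> adj_transp 3"
    using conj_perm[OF assms(2-7)] by blast
  have P: "adj_transp i permutes {1..n}" "adj_transp k permutes {1..n}" "adj_transp 1 permutes {1..n}"
    "adj_transp 3 permutes {1..n}"
    using adj_transp_permutes assms by auto
  show "trace (\<pi> (adj_transp i)) = trace (\<pi> (adj_transp 1))"
    by (rule conj_trace[OF assms(1) g(1) P(3) P(1) g(2)])
  show "trace (\<pi> (adj_transp k)) = trace (\<pi> (adj_transp 3))"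
    by (rule conj_trace[OF assms(1) g(1) P(4) P(2) g(3)])
  have "(adj_transp i \<circ> adj_transp k) \<circ> g = adj_transp i \<circ> (adj_transp k \<circ> g)" by (simp add: comp_assoc)
  also have "\<dots> = (adj_transp i \<circ> g) \<circ> adj_transp 3" unfolding g(3) by (simp add: comp_assoc)
  also have "\<dots> = g \<circ> (adj_transp 1 \<circ> adj_transp 3)" unfolding g(2) by (simp add: comp_assoc)
  finally have "(adj_transp i \<circ> adj_transp k) \<circ> g = g \<circ> (adj_transp 1 \<circ> adj_transp 3)" .
  then show "trace (\<pi> (adj_transp i \<circ> adj_transp k)) = trace (\<pi> (adj_transp 1 \<circ> adj_transp 3))"
    by (rule conj_trace[OF assms(1) g(1) permutes_compose[OF P(4) P(3)] permutes_compose[OF P(2) P(1)]])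
qed

theorem proposition3p3:
  fixes n i k :: nat
    and \<pi> :: "(nat \<Rightarrow> nat) \<Rightarrow> real^('d::{finite,linorder})^('d::{finite,linorder})"
    and ci ck :: "'d cliff"
  assumes "n \<ge> 4"
    and "orth_rep n \<pi>"
    and "1 \<le> i" "i \<le> n - 1" "1 \<le> k" "k \<le> n - 1"
    and "i + 1 < k \<or> k + 1 < i"
    and "pin ci" "pin ck"
    and "cl_rho ci = \<pi> (adj_transp i)" "cl_rho ck = \<pi> (adj_transp k)"
    and "cl_mult ci ci = cl_one" "cl_mult ck ck = cl_one"
  shows "cl_mult ci ck = cl_mult ck ci \<longleftrightarrow>
    (\<exists>m::int. (character \<pi> id - character \<pi> (adj_transp 1 \<circ> adj_transp 3)) / 2 = 4 * of_int m)"
proof -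
  have i1: "i + 1 \<le> n" and k1: "k + 1 \<le> n" using assms(1,4,6) by auto
  have Pi: "adj_transp i permutes {1..n}" and Pk: "adj_transp k permutes {1..n}"
    using adj_transp_permutes assms(3,5) i1 k1 by auto
  have hom: "\<And>a b. a permutes {1..n} \<Longrightarrow> b permutes {1..n} \<Longrightarrow> \<pi> (a \<circ> b) = \<pi> a ** \<pi> b"
    and orth: "\<And>a. a permutes {1..n} \<Longrightarrow> orthogonal_matrix (\<pi> a)"
    using assms(2) unfolding orth_rep_def by blast+
  have sq: "adj_transp j \<circ> adj_transp j = id" for j
    unfolding adj_transp_def by (auto simp: fun_eq_iff)
  have comm: "adj_transp i \<circ> adj_transp k = adj_transp k \<circ> adj_transp i"
    using assms(7) unfolding adj_transp_def by (auto simp: fun_eq_iff)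
  have S: "\<pi> (adj_transp j) ** \<pi> (adj_transp j) = mat 1" if "adj_transp j permutes {1..n}" for j
    using hom[OF that that] sq[of j] rep_id[OF assms(2)] by simp
  have T: "transpose (\<pi> (adj_transp j)) = \<pi> (adj_transp j)" if "adj_transp j permutes {1..n}" for j
  proof -
    let ?M = "\<pi> (adj_transp j)"
    have "transpose ?M ** ?M = mat 1" using orth[OF that] unfolding orthogonal_matrix_def by simp
    then have "transpose ?M = transpose ?M ** (?M ** ?M)" using S[OF that] by simp
    also have "\<dots> = ?M" by (simp add: matrix_mul_assoc \<open>transpose ?M ** ?M = mat 1\<close>)
    finally show ?thesis .
  qed
  have C: "\<pi> (adj_transp i) ** \<pi> (adj_transp k) = \<pi> (adj_transp k) ** \<pi> (adj_transp i)"
    using hom[OF Pi Pk] hom[OF Pk Pi] comm by simp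
  have tr_ik: "trace (\<pi> (adj_transp i)) = trace (\<pi> (adj_transp 1))"
    "trace (\<pi> (adj_transp k)) = trace (\<pi> (adj_transp 3))"
    "trace (\<pi> (adj_transp i \<circ> adj_transp k)) = trace (\<pi> (adj_transp 1 \<circ> adj_transp 3))"
    using traces_conj[OF assms(2) assms(1) assms(3) i1 assms(5) k1 assms(7)] by auto
  have tr31: "trace (\<pi> (adj_transp 3)) = trace (\<pi> (adj_transp 1))"
    using traces_conj(1)[OF assms(2) assms(1), of 3 1] assms(1) by auto
  have tr: "trace (\<pi> (adj_transp i)) = trace (\<pi> (adj_transp k))"
    using tr_ik tr31 by simp
  have main: "cl_mult ci ck = cl_mult ck ci \<longleftrightarrow>
    (\<exists>m::int. (trace (mat 1 :: real^('d::{finite,linorder})^('d::{finite,linorder})) - trace (\<pi> (adj_transp i) ** \<pi> (adj_transp k))) / 2 = 4 * of_int m)"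
    by (rule main_abstract[OF T[OF Pi] T[OF Pk] S[OF Pi] S[OF Pk] C assms(8) assms(12) assms(10) assms(9) assms(13) assms(11) tr])
  have "character \<pi> id - character \<pi> (adj_transp 1 \<circ> adj_transp 3) =
     trace (mat 1 :: real^('d::{finite,linorder})^('d::{finite,linorder})) - trace (\<pi> (adj_transp i) ** \<pi> (adj_transp k))"
    unfolding character_def rep_id[OF assms(2)] tr_ik(3)[symmetric] hom[OF Pi Pk] ..
  then show ?thesis using main by simp
qed


end
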